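(* Let $l=(l_1,\dots,l_m)$ be an admissible cut length vector for $f$ with distinguished index $i_0$ (as in conditions (ii),(iii) of admissibility), let $q$ be the order of $\sigma$, and let $l'=(l'_1,\dots,l'_m)$ be obtained from $l$ by a SC-folding of length $l^*$, where $0<l^*<l_{i_0}$ and $u_{i_0}(l_{i_0}-l^* )\in\mathcal{W}^{true}(l)$; that is, $l'_{i_0}=l_{i_0}-l^*$, $l'_{\sigma^{-p}(i_0)}=l_{\sigma^{-p}(i_0)}-\lambda^{-p}l^*$ for $p=1,\dots,q-1$, and $l'_j=l_j=0$ for $j$ not in the $\sigma$-orbit of $i_0$. Then $l'$ is admissible, and its total length satisfies $\sum_i l'_i=\sum_i l_i-\left(1+\frac1\lambda+\cdots+\frac{1}{\lambda^{q-1}}\right)l^*$.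
   Context: Let $S$ be a compact surface with marked points $X=\{x_0,\dots,x_n\}$ and $f:S\to S$ a pseudo-Anosov homeomorphism relative to $X$ with $f(x_0)=x_0$, $f(X)=X$, invariant stable and unstable transverse measured foliations $(\mathcal{F}^s,\mu^s)$, $(\mathcal{F}^u,\mu^u)$ (measures fixed) and dilatation $\lambda>1$: $f$ multiplies the $\mu^s$-length of arcs in leaves of $\mathcal{F}^u$ by $\lambda$. True singularities are the singular points of the foliations. Let $u_1,\dots,u_m$ be the unstable separatrices at $x_0$, cyclically indexed around $x_0$, with $f(u_i)=u_{\sigma(i)}$. Let $u_i(t)$ be the point of $u_i$ at $\mu^s$-length $t$ from $x_0$. For a nonzero cut length vector $l\in\mathbb{R}_+^m$, the cut line along $u_i$ is $[x_0,u_i(l_i)]\subset u_i$, $\mathcal{L}(l)$ is the union of cut lines, and $\mathcal{W}^{true}(l)$ is the union of the stable leaf segments emanating from the true singularities, each taken up to its first intersection with $\mathcal{L}(l)$. The vector $l$ is admissible if (i) there is a $\sigma$-orbit $\mathcal{O}$ with $l_i\neq0$ iff $i\in\mathcal{O}$, and there is $i_0\in\mathcal{O}$ (the distinguished index) with (ii) $l_{\sigma(i)}=\lambda l_i$ for all $i\neq i_0$ and (iii) $u_{i_0}(l_{i_0})\in\mathcal{W}^{true}(l)$. *)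

theory Defs
  imports Complex_Main "HOL-Combinatorics.Permutations"
begin

text \<open>Separatrices are indexed by 0..m-1 (instead of 1..m).
  u i t is the point of the unstable separatrix u_i at mu^s-length t from x0.
  Gam is the set of stable leaf rays emanating from the true singularities,
  each parametrised by [0,infinity) starting at the singularity.
  Cut length vectors are functions nat => real, only indices below m matter.\<close>

definition cut_lines :: "nat \<Rightarrow> (nat \<Rightarrow> real \<Rightarrow> 'a) \<Rightarrow> (nat \<Rightarrow> real) \<Rightarrow> 'a set" where
  "cut_lines m u l = (\<Union>i\<in>{..<m}. u i ` {0..l i})"

definition W_true :: "nat \<Rightarrow> (nat \<Rightarrow> real \<Rightarrow> 'a) \<Rightarrow> (real \<Rightarrow> 'a) set \<Rightarrow> (nat \<Rightarrow> real) \<Rightarrow> 'a set" where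
  "W_true m u Gam l =
     {p. \<exists>\<gamma>\<in>Gam. \<exists>t\<ge>0. \<gamma> t = p \<and> (\<forall>s\<in>{0..<t}. \<gamma> s \<notin> cut_lines m u l)}"

definition sorbit :: "(nat \<Rightarrow> nat) \<Rightarrow> nat \<Rightarrow> nat set" where
  "sorbit \<sigma> i = {(\<sigma> ^^ k) i | k. True}"

definition perm_order :: "nat \<Rightarrow> (nat \<Rightarrow> nat) \<Rightarrow> nat" where
  "perm_order m \<sigma> = (LEAST n. 0 < n \<and> (\<forall>i<m. (\<sigma> ^^ n) i = i))"

definition admissible_at ::
  "nat \<Rightarrow> (nat \<Rightarrow> nat) \<Rightarrow> real \<Rightarrow> (nat \<Rightarrow> real \<Rightarrow> 'a) \<Rightarrow> (real \<Rightarrow> 'a) set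
     \<Rightarrow> (nat \<Rightarrow> real) \<Rightarrow> nat \<Rightarrow> bool" where
  "admissible_at m \<sigma> lam u Gam l i0 \<longleftrightarrow>
     (\<forall>i<m. 0 \<le> l i) \<and> (\<exists>i<m. l i \<noteq> 0) \<and>
     (\<exists>j<m. (\<forall>i<m. l i \<noteq> 0 \<longleftrightarrow> i \<in> sorbit \<sigma> j) \<and>
        i0 \<in> sorbit \<sigma> j \<and> i0 < m \<and>
        (\<forall>i<m. i \<noteq> i0 \<longrightarrow> l (\<sigma> i) = lam * l i) \<and>
        u i0 (l i0) \<in> W_true m u Gam l)"

definition admissible ::
  "nat \<Rightarrow> (nat \<Rightarrow> nat) \<Rightarrow> real \<Rightarrow> (nat \<Rightarrow> real \<Rightarrow> 'a) \<Rightarrow> (real \<Rightarrow> 'a) set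
     \<Rightarrow> (nat \<Rightarrow> real) \<Rightarrow> bool" where
  "admissible m \<sigma> lam u Gam l \<longleftrightarrow> (\<exists>i0. admissible_at m \<sigma> lam u Gam l i0)"

end

theory Submission
  imports Defs
begin

lemma rot_mod_aux:
  assumes "(x::nat) < m" "i < m" "(x + n*k) mod m = x"
  shows "(i + n*k) mod m = i"
proof -
  have "x + n*k = m * ((x+n*k) div m) + x" using assms(3) by (metis div_mult_mod_eq mult.commute)
  then have "n*k = m * ((x+n*k) div m)" by linarith
  then show ?thesis using assms(2) by (metis mod_mult_self2 mod_less mult.commute)
qed

lemma rot_pow:
  assumes "\<forall>i<m. \<sigma> i = (i + k) mod m" "i < m"
  shows "(\<sigma> ^^ n) i = (i + n*k) mod m"
  using assms(2)
proof (induction n)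
  case 0 then show ?case by simp
next
  case (Suc n)
  have "(\<sigma> ^^ Suc n) i = \<sigma> ((i + n*k) mod m)" using Suc by simp
  also have "\<dots> = ((i + n*k) mod m + k) mod m" using assms(1) Suc.prems
    by (metis mod_less_divisor gr_implies_not0 neq0_conv)
  also have "\<dots> = (i + n*k + k) mod m" by (rule mod_add_left_eq)
  also have "i + n*k + k = i + Suc n * k" by simp
  finally show ?case .
qed

lemma cut_mono:
  assumes "\<forall>i<m. l' i \<le> l i"
  shows "cut_lines m u l' \<subseteq> cut_lines m u l"
  using assms unfolding cut_lines_def by fastforce

lemma W_mono:
  assumes "\<forall>i<m. l' i \<le> l i"
  shows "W_true m u Gam l \<subseteq> W_true m u Gam l'"
  using cut_mono[OF assms, of u] unfolding W_true_def by blast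

theorem proposition4p2:
  fixes m :: nat and \<sigma> :: "nat \<Rightarrow> nat" and lam :: real
    and u :: "nat \<Rightarrow> real \<Rightarrow> 'a" and Gam :: "(real \<Rightarrow> 'a) set"
    and l l' :: "nat \<Rightarrow> real" and i0 :: nat and lstar :: real
  assumes lam: "lam > 1"
    and m: "0 < m"
    and perm: "\<sigma> permutes {..<m}"
    and rot: "\<exists>k. \<forall>i<m. \<sigma> i = (i + k) mod m"
    and adm: "admissible_at m \<sigma> lam u Gam l i0"
    and ls: "0 < lstar" "lstar < l i0"
    and fold_pt: "u i0 (l i0 - lstar) \<in> W_true m u Gam l"
    and l'_i0: "l' i0 = l i0 - lstar"
    and l'_orb: "\<forall>p\<in>{1..perm_order m \<sigma> - 1}.
                   l' ((inv \<sigma> ^^ p) i0) = l ((inv \<sigma> ^^ p) i0) - lstar / lam ^ p"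
    and l'_out: "\<forall>j<m. j \<notin> sorbit \<sigma> i0 \<longrightarrow> l' j = l j"
  shows "admissible m \<sigma> lam u Gam l' \<and>
         (\<Sum>i<m. l' i) = (\<Sum>i<m. l i) - (\<Sum>p<perm_order m \<sigma>. 1 / lam ^ p) * lstar"
proof -
  obtain k where k: "\<forall>i<m. \<sigma> i = (i + k) mod m" using rot by blast
  have pw: "\<And>n i. i < m \<Longrightarrow> (\<sigma> ^^ n) i = (i + n*k) mod m" using rot_pow[OF k] by blast
  obtain j where j: "j < m" "\<forall>i<m. l i \<noteq> 0 \<longleftrightarrow> i \<in> sorbit \<sigma> j" "i0 \<in> sorbit \<sigma> j"
    and i0m: "i0 < m" and lrel: "\<forall>i<m. i \<noteq> i0 \<longrightarrow> l (\<sigma> i) = lam * l i"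
    and lnn: "\<forall>i<m. 0 \<le> l i"
    using adm unfolding admissible_at_def by blast
  define q where "q = perm_order m \<sigma>"
  have exq: "0 < m \<and> (\<forall>i<m. (\<sigma> ^^ m) i = i)"
    using m pw by (simp add: mult.commute)
  have qP: "0 < q \<and> (\<forall>i<m. (\<sigma> ^^ q) i = i)"
    unfolding q_def perm_order_def by (rule LeastI[of _ m], rule exq)
  have qmin: "\<And>n. 0 < n \<Longrightarrow> n < q \<Longrightarrow> \<not> (\<forall>i<m. (\<sigma> ^^ n) i = i)"
    unfolding q_def perm_order_def using not_less_Least by blast
  have rotid: "\<And>n x. x < m \<Longrightarrow> (\<sigma> ^^ n) x = x \<Longrightarrow> \<forall>i<m. (\<sigma> ^^ n) i = i"
  proof (intro allI impI)
    fix n x i assume x: "x < m" "(\<sigma> ^^ n) x = x" and i: "i < m"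
    have "(x + n*k) mod m = x" using pw[OF x(1)] x(2) by simp
    then show "(\<sigma> ^^ n) i = i" using pw[OF i] rot_mod_aux[OF x(1) i] by simp
  qed
  have bij: "bij \<sigma>" using perm permutes_bij by blast
  have sinv: "\<And>x. \<sigma> (inv \<sigma> x) = x" using bij by (simp add: bij_is_surj surj_f_inv_f)
  have invs: "\<And>x. inv \<sigma> (\<sigma> x) = x" using bij by (simp add: bij_is_inj)
  have sm: "\<And>x. x < m \<Longrightarrow> \<sigma> x < m" using perm permutes_in_image by fastforce
  have ism: "\<And>x. x < m \<Longrightarrow> inv \<sigma> x < m"
  proof (rule ccontr)
    fix x assume x: "x < m" "\<not> inv \<sigma> x < m"
    then have "\<sigma> (inv \<sigma> x) = inv \<sigma> x" using perm permutes_not_in by fastforce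
    then show False using x sinv by metis
  qed
  define g where "g p = (inv \<sigma> ^^ p) i0" for p
  have gS: "\<And>p. g (Suc p) = inv \<sigma> (g p)" unfolding g_def by simp
  have gm: "\<And>p. g p < m"
  proof -
    fix p show "g p < m" by (induction p) (auto simp: g_def i0m ism)
  qed
  have F3: "\<And>jj n. (\<sigma> ^^ jj) (g (n + jj)) = g n"
  proof -
    fix jj n show "(\<sigma> ^^ jj) (g (n + jj)) = g n"
    proof (induction jj)
      case 0 then show ?case by simp
    next
      case (Suc jj)
      have "(\<sigma> ^^ Suc jj) (g (n + Suc jj)) = (\<sigma> ^^ jj) (\<sigma> (g (Suc (n + jj))))"
        by (simp only: funpow_Suc_right comp_apply add_Suc_right)
      also have "\<dots> = (\<sigma> ^^ jj) (g (n + jj))" by (simp add: gS sinv)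
      finally show ?case using Suc by simp
    qed
  qed
  have g0: "g 0 = i0" by (simp add: g_def)
  have gq: "g q = i0"
  proof -
    have "(\<sigma> ^^ q) (g q) = i0" using F3[of q 0] g0 by simp
    then show ?thesis using qP gm by metis
  qed
  have gdist: "inj_on g {..<q}"
  proof (rule inj_onI, rule ccontr)
    fix a b assume ab: "a \<in> {..<q}" "b \<in> {..<q}" "g a = g b" "a \<noteq> b"
    { fix a b assume ab: "a < b" "b < q" "g a = g b"
      have "(\<sigma> ^^ a) (g a) = i0" using F3[of a 0] g0 by simp
      moreover have "(\<sigma> ^^ a) (g b) = g (b - a)" using F3[of a "b-a"] ab by simp
      ultimately have e: "g (b - a) = i0" using ab by simp
      have "(\<sigma> ^^ (b-a)) i0 = i0" using F3[of "b-a" 0] g0 e by simp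
      moreover have "b - a < q" "0 < b - a" using ab by linarith+
      ultimately have False using qmin[of "b-a"] rotid[OF i0m, of "b-a"] by blast }
    then show False using ab by (metis lessThan_iff linorder_neqE_nat)
  qed
  have powq: "\<And>n y. y < m \<Longrightarrow> (\<sigma> ^^ (n*q)) y = y"
  proof -
    fix n y assume y: "y < m"
    show "(\<sigma> ^^ (n*q)) y = y"
    proof (induction n)
      case 0 then show ?case by simp
    next
      case (Suc n)
      have "(\<sigma> ^^ (Suc n * q)) y = (\<sigma> ^^ q) ((\<sigma> ^^ (n*q)) y)"
        by (simp add: funpow_add)
      then show ?case using Suc qP y by simp
    qed
  qed
  have powmod: "\<And>n y. y < m \<Longrightarrow> (\<sigma> ^^ n) y = (\<sigma> ^^ (n mod q)) y"
  proof -
    fix n y assume y: "y < m"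
    have "(\<sigma> ^^ n) y = (\<sigma> ^^ (n mod q)) ((\<sigma> ^^ ((n div q) * q)) y)"
    proof -
      have "n = n mod q + (n div q) * q" by simp
      then have "(\<sigma> ^^ n) = (\<sigma> ^^ (n mod q)) \<circ> (\<sigma> ^^ ((n div q) * q))"
        by (metis funpow_add)
      then show ?thesis by simp
    qed
    then show "(\<sigma> ^^ n) y = (\<sigma> ^^ (n mod q)) y" using powq y by simp
  qed
  have orb: "sorbit \<sigma> i0 = g ` {..<q}"
  proof
    show "sorbit \<sigma> i0 \<subseteq> g ` {..<q}"
    proof
      fix x assume "x \<in> sorbit \<sigma> i0"
      then obtain n where x: "x = (\<sigma> ^^ n) i0" unfolding sorbit_def by blast
      define r where "r = n mod q"
      have r: "r < q" using qP r_def by simp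
      have "x = (\<sigma> ^^ r) i0" unfolding r_def using powmod[OF i0m, of n] x by simp
      also have "\<dots> = g (q - r)" using F3[of r "q-r"] gq r by simp
      finally show "x \<in> g ` {..<q}"
        using r gq g0 by (cases "r = 0") (auto intro: image_eqI[where x=0])
    qed
  next
    show "g ` {..<q} \<subseteq> sorbit \<sigma> i0"
    proof
      fix x assume "x \<in> g ` {..<q}"
      then obtain p where p: "p < q" "x = g p" by blast
      have "(\<sigma> ^^ (q-p)) (g (p + (q-p))) = g p" by (rule F3)
      then have "x = (\<sigma> ^^ (q-p)) i0" using p gq by simp
      then show "x \<in> sorbit \<sigma> i0" unfolding sorbit_def by blast
    qed
  qed
  have orbj: "\<And>i. i < m \<Longrightarrow> i \<in> sorbit \<sigma> j \<longleftrightarrow> i \<in> sorbit \<sigma> i0"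
  proof -
    fix i assume im: "i < m"
    obtain a where a: "i0 = (\<sigma> ^^ a) j" using j(3) unfolding sorbit_def by blast
    show "i \<in> sorbit \<sigma> j \<longleftrightarrow> i \<in> sorbit \<sigma> i0"
    proof
      assume "i \<in> sorbit \<sigma> j"
      then obtain b where b: "i = (\<sigma> ^^ b) j" unfolding sorbit_def by blast
      have "(\<sigma> ^^ (b + a*(q-1))) i0 = (\<sigma> ^^ (b + a*(q-1) + a)) j"
        using a by (simp add: funpow_add)
      also have "b + a*(q-1) + a = b + a*q" using qP
        by (cases q) (auto simp: algebra_simps)
      also have "(\<sigma> ^^ (b + a*q)) j = i" using b powq[OF j(1), of a]
        by (simp add: funpow_add mult.commute)
      finally have "i = (\<sigma> ^^ (b + a*(q-1))) i0" by simp
      then show "i \<in> sorbit \<sigma> i0" unfolding sorbit_def by blast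
    next
      assume "i \<in> sorbit \<sigma> i0"
      then obtain b where b: "i = (\<sigma> ^^ b) i0" unfolding sorbit_def by blast
      have "i = (\<sigma> ^^ (b + a)) j" using a b by (simp add: funpow_add)
      then show "i \<in> sorbit \<sigma> j" unfolding sorbit_def by blast
    qed
  qed
  have supp: "\<And>i. i < m \<Longrightarrow> l i \<noteq> 0 \<longleftrightarrow> i \<in> g ` {..<q}"
    using j(2) orbj orb by blast
  have lam0: "lam > 0" using lam by simp
  have lg: "\<And>p. p < q \<Longrightarrow> l (g p) = l i0 / lam ^ p"
  proof -
    fix p show "p < q \<Longrightarrow> l (g p) = l i0 / lam ^ p"
    proof (induction p)
      case 0 then show ?case using g0 by simp
    next
      case (Suc p)
      have ne: "g (Suc p) \<noteq> i0"
      proof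
        assume "g (Suc p) = i0"
        then have "g (Suc p) = g 0" using g0 by simp
        then have "Suc p = 0" using inj_onD[OF gdist, of "Suc p" 0] Suc.prems by simp
        then show False by simp
      qed
      have "l (g p) = lam * l (g (Suc p))"
        using lrel gm[of "Suc p"] ne sinv[of "g p"] unfolding gS by metis
      then have "l (g (Suc p)) = l (g p) / lam" using lam0 by simp
      then show ?case using Suc by simp
    qed
  qed
  have l'g: "\<And>p. p < q \<Longrightarrow> l' (g p) = l (g p) - lstar / lam ^ p"
  proof -
    fix p assume p: "p < q"
    show "l' (g p) = l (g p) - lstar / lam ^ p"
    proof (cases "p = 0")
      case True then show ?thesis using g0 l'_i0 by simp
    next
      case False then show ?thesis using l'_orb p unfolding g_def q_def by auto
    qed
  qed
  have l'g2: "\<And>p. p < q \<Longrightarrow> l' (g p) = (l i0 - lstar) / lam ^ p"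
    using l'g lg by (simp add: diff_divide_distrib)
  have l'gpos: "\<And>p. p < q \<Longrightarrow> l' (g p) > 0"
    using l'g2 ls lam0 by simp
  have outside: "\<And>i. i < m \<Longrightarrow> i \<notin> g ` {..<q} \<Longrightarrow> l' i = 0 \<and> l i = 0"
  proof -
    fix i assume i: "i < m" "i \<notin> g ` {..<q}"
    then show "l' i = 0 \<and> l i = 0" using l'_out orb supp[OF i(1)] by simp
  qed
  have le: "\<forall>i<m. l' i \<le> l i"
  proof (intro allI impI)
    fix i assume i: "i < m"
    show "l' i \<le> l i"
    proof (cases "i \<in> g ` {..<q}")
      case True
      then obtain p where "p < q" "i = g p" by blast
      then show ?thesis using l'g ls lam0 by simp
    next
      case False then show ?thesis using outside i by simp
    qed
  qed
  have adm': "admissible_at m \<sigma> lam u Gam l' i0"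
    unfolding admissible_at_def
  proof (intro conjI)
    show "\<forall>i<m. 0 \<le> l' i"
    proof (intro allI impI)
      fix i assume i: "i < m"
      show "0 \<le> l' i"
      proof (cases "i \<in> g ` {..<q}")
        case True then obtain p where "p < q" "i = g p" by blast
        then show ?thesis using l'gpos[of p] by simp
      next
        case False then show ?thesis using outside i by simp
      qed
    qed
    show "\<exists>i<m. l' i \<noteq> 0" using i0m l'gpos[of 0] g0 qP by auto
    show "\<exists>j<m. (\<forall>i<m. (l' i \<noteq> 0) = (i \<in> sorbit \<sigma> j)) \<and> i0 \<in> sorbit \<sigma> j \<and> i0 < m \<and>
        (\<forall>i<m. i \<noteq> i0 \<longrightarrow> l' (\<sigma> i) = lam * l' i) \<and> u i0 (l' i0) \<in> W_true m u Gam l'"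
    proof (intro exI[of _ i0] conjI allI impI)
      show "i0 < m" by (rule i0m)
      show "i0 < m" by (rule i0m)
      fix i assume im: "i < m"
      show "(l' i \<noteq> 0) = (i \<in> sorbit \<sigma> i0)"
      proof (cases "i \<in> g ` {..<q}")
        case True then obtain p where "p < q" "i = g p" by blast
        then show ?thesis using l'gpos[of p] orb True by simp
      next
        case False then show ?thesis using outside im orb by simp
      qed
    next
      show "i0 \<in> sorbit \<sigma> i0" unfolding sorbit_def by (rule CollectI, rule exI[of _ 0], simp)
    next
      fix i assume im: "i < m" and ni: "i \<noteq> i0"
      show "l' (\<sigma> i) = lam * l' i"
      proof (cases "i \<in> g ` {..<q}")
        case True
        then obtain p where p: "p < q" "i = g p" by blast
        have p0: "p \<noteq> 0"
        proof
          assume "p = 0" then show False using ni g0 p(2) by simp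
        qed
        then obtain r where r: "p = Suc r" using not0_implies_Suc by blast
        have "\<sigma> i = g r" using p r gS sinv by simp
        then have "l' (\<sigma> i) = (l i0 - lstar) / lam ^ r" using l'g2 p r by simp
        also have "\<dots> = lam * ((l i0 - lstar) / lam ^ p)" using r lam0 by simp
        finally show ?thesis using l'g2 p by simp
      next
        case False
        have "\<sigma> i \<notin> g ` {..<q}"
        proof
          assume "\<sigma> i \<in> g ` {..<q}"
          then obtain p where p: "p < q" "\<sigma> i = g p" by blast
          have "i = g (Suc p)" using p(2) invs[of i] gS[of p] by simp
          moreover have "g (Suc p) \<in> g ` {..<q}"
          proof (cases "Suc p = q")
            case True then have "g (Suc p) = g 0" using gq g0 by simp
            then show ?thesis using qP by auto
          next
            case False then show ?thesis using p by simp
          qed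
          ultimately show False using False by simp
        qed
        then show ?thesis using outside im False sm by simp
      qed
    next
      show "u i0 (l' i0) \<in> W_true m u Gam l'"
        using W_mono[OF le, of u Gam] fold_pt l'_i0 by auto
    qed
  qed
  have sumdiff: "(\<Sum>i<m. l i - l' i) = (\<Sum>p<q. lstar / lam ^ p)"
  proof -
    have sub: "g ` {..<q} \<subseteq> {..<m}" using gm by auto
    have "(\<Sum>i<m. l i - l' i) = (\<Sum>i\<in>g ` {..<q}. l i - l' i)"
      by (rule sum.mono_neutral_right) (use sub outside in auto)
    also have "\<dots> = (\<Sum>p<q. l (g p) - l' (g p))" by (rule sum.reindex[OF gdist, unfolded comp_def])
    also have "\<dots> = (\<Sum>p<q. lstar / lam ^ p)" using l'g by simp
    finally show ?thesis .
  qed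
  have "(\<Sum>i<m. l' i) = (\<Sum>i<m. l i) - (\<Sum>p<q. 1 / lam ^ p) * lstar"
  proof -
    have "(\<Sum>p<q. 1 / lam ^ p) * lstar = (\<Sum>p<q. lstar / lam ^ p)"
      by (simp add: sum_distrib_right)
    then show ?thesis using sumdiff by (simp add: sum_subtractf)
  qed
  then show ?thesis using adm' unfolding admissible_def q_def by blast
qed

end
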